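(* Consider an $\mathsf{oSQMA}$ verifier $\{Q_n\}$ whose circuits consist only of Hadamard, Toffoli and NOT gates. Then there is a polynomial $l$ such that for every yes-instance $x$, the maximum acceptance probability of $Q_{|x|}$ on $x$ (over all witness states) equals $\frac{p}{q}$ for some $p, q \in \mathbb{N}$ with $\log p, \log q \leq l(|x|)$.
   Context: $\Sigma=\{0,1\}$. For a nonempty $S \subseteq [2^p]$, the subset state is $\ket{S} := \frac{1}{\sqrt{|S|}}\sum_{i \in S}\ket{i}$ (computational basis indexed by $[2^p]$). $\mathsf{oSQMA}$: a promise problem $A=(A_{yes},A_{no})$ is in $\mathsf{oSQMA}$ iff there exist polynomials $p,q$ and a polynomial-time uniform family of quantum circuits $\{Q_n\}$ (the verifier), where $Q_n$ takes $x \in \Sigma^*$ with $|x|=n$, a $p(n)$-qubit state, and $q(n)$ ancilla qubits in $\ket{0}^{\otimes q(n)}$, such that: if $x\in A_{yes}$ there is a subset $S \subseteq [2^{p(n)}]$ such that $Q_n$ accepts $(x,\ket{S})$ with probability at least $2/3$ and $\ket{S}$ maximizes the acceptance probability over all $p(n)$-qubit states; if $x \in A_{no}$ then every $p(n)$-qubit state is accepted with probability at most $1/3$. Acceptance means measuring a designated output qubit in the computational basis and obtaining $1$. *)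

theory Defs
  imports Complex_Main "HOL-Computational_Algebra.Polynomial"
begin

text \<open>Gate set: Hadamard, NOT and Toffoli only (the circuits of the verifier consist only of these).
Qubit j of a register corresponds to bit j of the computational-basis index.\<close>

datatype gate = Had nat | Notg nat | Tof nat nat nat

type_synonym qstate = "nat \<Rightarrow> complex"

fun gate_ok :: "nat \<Rightarrow> gate \<Rightarrow> bool" where
  "gate_ok m (Had j) = (j < m)"
| "gate_ok m (Notg j) = (j < m)"
| "gate_ok m (Tof a b c) = (a < m \<and> b < m \<and> c < m \<and> a \<noteq> b \<and> a \<noteq> c \<and> b \<noteq> c)"

fun apply_gate :: "gate \<Rightarrow> qstate \<Rightarrow> qstate" where
  "apply_gate (Had j) \<psi> =
     (\<lambda>i. (\<psi> (unset_bit j i) + (if bit i j then -1 else 1) * \<psi> (set_bit j i))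
           / complex_of_real (sqrt 2))"
| "apply_gate (Notg j) \<psi> = (\<lambda>i. \<psi> (flip_bit j i))"
| "apply_gate (Tof a b c) \<psi> = (\<lambda>i. if bit i a \<and> bit i b then \<psi> (flip_bit c i) else \<psi> i)"

definition run_circuit :: "gate list \<Rightarrow> qstate \<Rightarrow> qstate" where
  "run_circuit C \<psi> = fold apply_gate C \<psi>"

definition unit_state :: "nat \<Rightarrow> qstate \<Rightarrow> bool" where
  "unit_state k \<psi> \<longleftrightarrow> (\<forall>i\<ge>2^k. \<psi> i = 0) \<and> (\<Sum>i<2^k. (cmod (\<psi> i))\<^sup>2) = 1"

definition subset_state :: "nat set \<Rightarrow> qstate" where
  "subset_state S = (\<lambda>i. if i \<in> S then 1 / complex_of_real (sqrt (real (card S))) else 0)"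

fun enc :: "bool list \<Rightarrow> nat" where
  "enc [] = 0"
| "enc (b # bs) = of_bool b + 2 * enc bs"

text \<open>Register layout: qubits 0..n-1 hold x, qubits n..n+k-1 the witness, the rest ancillas in |0>.\<close>
definition initial_state :: "bool list \<Rightarrow> nat \<Rightarrow> qstate \<Rightarrow> qstate" where
  "initial_state x k \<psi> =
     (\<lambda>i. if i mod 2 ^ length x = enc x \<and> i div 2 ^ length x < 2 ^ k
          then \<psi> (i div 2 ^ length x) else 0)"

text \<open>A verifier is given by circuits Q n, output qubit out n, witness length poly pw n
and ancilla count poly qa n.\<close>
definition total_qubits :: "nat poly \<Rightarrow> nat poly \<Rightarrow> nat \<Rightarrow> nat" where
  "total_qubits pw qa n = n + poly pw n + poly qa n"

definition acc :: "(nat \<Rightarrow> gate list) \<Rightarrow> (nat \<Rightarrow> nat) \<Rightarrow> nat poly \<Rightarrow> nat poly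
                   \<Rightarrow> bool list \<Rightarrow> qstate \<Rightarrow> real" where
  "acc Q out pw qa x \<psi> =
     (let n = length x;
          \<phi> = run_circuit (Q n) (initial_state x (poly pw n) \<psi>)
      in \<Sum>i\<in>{i. i < 2 ^ total_qubits pw qa n \<and> bit i (out n)}. (cmod (\<phi> i))\<^sup>2)"

definition max_acc :: "(nat \<Rightarrow> gate list) \<Rightarrow> (nat \<Rightarrow> nat) \<Rightarrow> nat poly \<Rightarrow> nat poly
                       \<Rightarrow> bool list \<Rightarrow> real" where
  "max_acc Q out pw qa x =
     (SUP \<psi> \<in> {\<psi>. unit_state (poly pw (length x)) \<psi>}. acc Q out pw qa x \<psi>)"

definition oSQMA_verifier :: "(nat \<Rightarrow> gate list) \<Rightarrow> (nat \<Rightarrow> nat) \<Rightarrow> nat poly \<Rightarrow> nat poly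
                              \<Rightarrow> bool list set \<Rightarrow> bool list set \<Rightarrow> bool" where
  "oSQMA_verifier Q out pw qa Ayes Ano \<longleftrightarrow>
     (\<forall>n. (\<forall>g\<in>set (Q n). gate_ok (total_qubits pw qa n) g) \<and> out n < total_qubits pw qa n)
   \<and> (\<exists>s::nat poly. \<forall>n. length (Q n) \<le> poly s n)
   \<and> (\<forall>x\<in>Ayes. \<exists>S. S \<subseteq> {..<2 ^ poly pw (length x)} \<and> S \<noteq> {}
          \<and> acc Q out pw qa x (subset_state S) \<ge> 2/3
          \<and> (\<forall>\<psi>. unit_state (poly pw (length x)) \<psi>
                  \<longrightarrow> acc Q out pw qa x \<psi> \<le> acc Q out pw qa x (subset_state S)))
   \<and> (\<forall>x\<in>Ano. \<forall>\<psi>. unit_state (poly pw (length x)) \<psi> \<longrightarrow> acc Q out pw qa x \<psi> \<le> 1/3)"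

end

theory Submission
  imports Defs
begin

definition good :: "nat \<Rightarrow> nat \<Rightarrow> qstate \<Rightarrow> bool" where
  "good N h \<phi> \<longleftrightarrow> (\<exists>c::nat \<Rightarrow> int. (\<forall>i. \<phi> i = complex_of_real (real_of_int (c i) / (sqrt N * sqrt 2 ^ h)))
        \<and> (\<forall>i. \<bar>c i\<bar> \<le> 2 ^ h))"

lemma good_gate:
  assumes "good N h \<phi>"
  shows "\<exists>h'. h \<le> h' \<and> h' \<le> Suc h \<and> good N h' (apply_gate g \<phi>)"
proof (cases g)
  case (Had j)
  from assms obtain c where c: "\<And>i. \<phi> i = complex_of_real (real_of_int (c i) / (sqrt N * sqrt 2 ^ h))"
    and b: "\<And>i. \<bar>c i\<bar> \<le> 2 ^ h" unfolding good_def by blast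
  define c' where "c' i = c (unset_bit j i) + (if bit i j then -1 else 1) * c (set_bit j i)" for i
  have "good N (Suc h) (apply_gate g \<phi>)"
    unfolding good_def
  proof (intro exI[of _ c'] conjI allI)
    fix i
    define D where "D = sqrt N * sqrt 2 ^ h"
    have D2: "sqrt N * sqrt 2 ^ Suc h = D * sqrt 2" unfolding D_def by (simp add: mult_ac)
    have e1: "((complex_of_real (real_of_int a / D)) + (-1) * complex_of_real (real_of_int b / D)) / complex_of_real (sqrt 2)
       = complex_of_real (real_of_int (a + -1 * b) / (D * sqrt 2))" for a b
      by (simp add: of_real_diff[symmetric] of_real_divide[symmetric] diff_divide_distrib)
    have e2: "((complex_of_real (real_of_int a / D)) + 1 * complex_of_real (real_of_int b / D)) / complex_of_real (sqrt 2)
       = complex_of_real (real_of_int (a + 1 * b) / (D * sqrt 2))" for a b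
      by (simp add: of_real_add[symmetric] of_real_divide[symmetric] add_divide_distrib)
    show "apply_gate g \<phi> i = complex_of_real (real_of_int (c' i) / (sqrt N * sqrt 2 ^ Suc h))"
    proof (cases "bit i j")
      case True
      show ?thesis unfolding D2 Had apply_gate.simps c'_def c D_def[symmetric] using True e1[of "c (unset_bit j i)" "c (set_bit j i)"] by simp
    next
      case False
      show ?thesis unfolding D2 Had apply_gate.simps c'_def c D_def[symmetric] using False e2[of "c (unset_bit j i)" "c (set_bit j i)"] by simp
    qed
  next
    fix i
    have "\<bar>c' i\<bar> \<le> \<bar>c (unset_bit j i)\<bar> + \<bar>c (set_bit j i)\<bar>" unfolding c'_def by (cases "bit i j") (simp_all add: abs_triangle_ineq abs_triangle_ineq4)
    also have "\<dots> \<le> 2 ^ Suc h" using b[of "unset_bit j i"] b[of "set_bit j i"] by simp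
    finally show "\<bar>c' i\<bar> \<le> 2 ^ Suc h" .
  qed
  then show ?thesis by (intro exI[of _ "Suc h"]) simp
next
  case (Notg j)
  from assms obtain c where c: "\<And>i. \<phi> i = complex_of_real (real_of_int (c i) / (sqrt N * sqrt 2 ^ h))"
    and b: "\<And>i. \<bar>c i\<bar> \<le> 2 ^ h" unfolding good_def by blast
  have "good N h (apply_gate g \<phi>)" unfolding good_def
    by (rule exI[of _ "\<lambda>i. c (flip_bit j i)"]) (simp add: Notg c b)
  then show ?thesis by (intro exI[of _ h]) simp
next
  case (Tof a b' d)
  from assms obtain c where c: "\<And>i. \<phi> i = complex_of_real (real_of_int (c i) / (sqrt N * sqrt 2 ^ h))"
    and b: "\<And>i. \<bar>c i\<bar> \<le> 2 ^ h" unfolding good_def by blast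
  have "good N h (apply_gate g \<phi>)" unfolding good_def
    by (rule exI[of _ "\<lambda>i. if bit i a \<and> bit i b' then c (flip_bit d i) else c i"]) (simp add: Tof c b)
  then show ?thesis by (intro exI[of _ h]) simp
qed

lemma good_fold:
  "good N h \<phi> \<Longrightarrow> \<exists>h'. h \<le> h' \<and> h' \<le> h + length C \<and> good N h' (fold apply_gate C \<phi>)"
proof (induction C arbitrary: h \<phi>)
  case Nil then show ?case by auto
next
  case (Cons g C)
  from good_gate[OF Cons.prems, of g] obtain h1 where "h \<le> h1" "h1 \<le> Suc h" "good N h1 (apply_gate g \<phi>)" by blast
  with Cons.IH[of h1 "apply_gate g \<phi>"] obtain h2 where
    "h1 \<le> h2" "h2 \<le> h1 + length C" "good N h2 (fold apply_gate C (apply_gate g \<phi>))" by blast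
  with \<open>h \<le> h1\<close> \<open>h1 \<le> Suc h\<close> show ?case by (intro exI[of _ h2]) simp
qed

lemma log2_bound: "p \<le> (2::nat) ^ m \<Longrightarrow> log 2 (real p) \<le> real m"
proof (cases "p = 0")
  case False
  assume "p \<le> 2 ^ m"
  hence "real p \<le> 2 ^ m" by (metis of_nat_le_iff of_nat_numeral of_nat_power)
  hence "log 2 (real p) \<le> log 2 (2 ^ m)" using False by (subst log_le_cancel_iff) auto
  also have "\<dots> = real m" by simp
  finally show ?thesis .
qed (simp add: log_def)

lemma sq_term: "(cmod (complex_of_real (real_of_int c / (sqrt (real N) * sqrt 2 ^ h))))\<^sup>2
   = real_of_int (c\<^sup>2) / (real N * 2 ^ h)"
proof -
  have "(sqrt 2 ^ h)\<^sup>2 = (2::real) ^ h" by (simp add: power2_eq_square power_mult_distrib[symmetric])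
  then have "(real_of_int c / (sqrt (real N) * sqrt 2 ^ h))\<^sup>2 = real_of_int (c\<^sup>2) / (real N * 2 ^ h)"
    by (simp add: power_divide power_mult_distrib)
  then show ?thesis by (simp only: norm_of_real power2_abs)
qed

lemma subset_unit:
  assumes "S \<subseteq> {..<2 ^ k}" "S \<noteq> {}"
  shows "unit_state k (subset_state S)"
proof -
  have fin: "finite S" using assms(1) finite_subset by blast
  hence N: "card S > 0" using assms(2) by (simp add: card_gt_0_iff)
  have "(\<Sum>i<2^k. (cmod (subset_state S i))\<^sup>2) = (\<Sum>i\<in>S. (cmod (subset_state S i))\<^sup>2)"
    by (rule sum.mono_neutral_right) (use assms(1) in \<open>auto simp: subset_state_def\<close>)
  also have "\<dots> = (\<Sum>i\<in>S. 1 / real (card S))"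
    by (rule sum.cong) (auto simp: subset_state_def norm_divide power_divide)
  also have "\<dots> = 1" using N by simp
  finally show ?thesis unfolding unit_state_def using assms(1) by (auto simp: subset_state_def)
qed

theorem mainTheorem10:
  fixes Q :: "nat \<Rightarrow> gate list" and out :: "nat \<Rightarrow> nat" and pw qa :: "nat poly"
    and Ayes Ano :: "bool list set"
  assumes "oSQMA_verifier Q out pw qa Ayes Ano"
  shows "\<exists>l::nat poly. \<forall>x\<in>Ayes. \<exists>p q :: nat. q > 0
           \<and> max_acc Q out pw qa x = real p / real q
           \<and> log 2 (real p) \<le> real (poly l (length x))
           \<and> log 2 (real q) \<le> real (poly l (length x))"
proof -
  from assms obtain s :: "nat poly" where s: "\<And>n. length (Q n) \<le> poly s n"
    using assms unfolding oSQMA_verifier_def by (elim conjE) blast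
  have yes: "\<And>x. x \<in> Ayes \<Longrightarrow> \<exists>S. S \<subseteq> {..<2 ^ poly pw (length x)} \<and> S \<noteq> {}
          \<and> (\<forall>\<psi>. unit_state (poly pw (length x)) \<psi>
                  \<longrightarrow> acc Q out pw qa x \<psi> \<le> acc Q out pw qa x (subset_state S))"
    using assms unfolding oSQMA_verifier_def by (elim conjE) (metis (no_types, lifting))
  define l where "l = [:0,1:] + pw + qa + smult 2 s"
  have l: "poly l n = n + poly pw n + poly qa n + 2 * poly s n" for n unfolding l_def by (simp only: poly_add poly_smult poly_pCons poly_0) simp
  show ?thesis
  proof (intro exI[of _ l] ballI)
    fix x assume "x \<in> Ayes"
    then obtain S where S: "S \<subseteq> {..<2 ^ poly pw (length x)}" "S \<noteq> {}"
      and mx: "\<And>\<psi>. unit_state (poly pw (length x)) \<psi> \<Longrightarrow> acc Q out pw qa x \<psi> \<le> acc Q out pw qa x (subset_state S)"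
      using yes[OF \<open>x \<in> Ayes\<close>] by auto
    define n where "n = length x"
    define k where "k = poly pw n"
    define N where "N = card S"
    define T where "T = total_qubits pw qa n"
    have finS: "finite S" using S(1) finite_subset by blast
    have N0: "N > 0" using finS S(2) by (simp add: N_def card_gt_0_iff)
    have Nle: "N \<le> 2 ^ k" unfolding N_def k_def n_def using card_mono[OF _ S(1)] by simp
    have unit: "unit_state k (subset_state S)" using subset_unit[OF S] by (simp add: k_def n_def)
    have maxeq: "max_acc Q out pw qa x = acc Q out pw qa x (subset_state S)"
      unfolding max_acc_def
    proof (rule cSup_eq_maximum)
      show "acc Q out pw qa x (subset_state S) \<in> acc Q out pw qa x ` {\<psi>. unit_state (poly pw (length x)) \<psi>}"
        using unit unfolding k_def n_def by blast
      show "\<And>y. y \<in> acc Q out pw qa x ` {\<psi>. unit_state (poly pw (length x)) \<psi>} \<Longrightarrow> y \<le> acc Q out pw qa x (subset_state S)"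
        using mx by blast
    qed
    define c0 :: "nat \<Rightarrow> int" where "c0 i = (if i mod 2 ^ n = enc x \<and> i div 2 ^ n < 2 ^ k \<and> i div 2 ^ n \<in> S then 1 else 0)" for i
    have g0: "good N 0 (initial_state x k (subset_state S))"
      unfolding good_def
    proof (intro exI[of _ c0] conjI allI)
      fix i
      show "\<bar>c0 i\<bar> \<le> 2 ^ 0" by (simp add: c0_def)
      show "initial_state x k (subset_state S) i = complex_of_real (real_of_int (c0 i) / (sqrt (real N) * sqrt 2 ^ 0))"
        unfolding initial_state_def subset_state_def c0_def N_def n_def by simp
    qed
    from good_fold[OF g0, of "Q n"] obtain h where h: "h \<le> length (Q n)"
      and gh: "good N h (run_circuit (Q n) (initial_state x k (subset_state S)))"
      unfolding run_circuit_def by auto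
    then obtain c where c: "\<And>i. run_circuit (Q n) (initial_state x k (subset_state S)) i
        = complex_of_real (real_of_int (c i) / (sqrt N * sqrt 2 ^ h))"
      and cb: "\<And>i. \<bar>c i\<bar> \<le> 2^h" unfolding good_def by blast
    define A where "A = {i::nat. i < 2 ^ T \<and> bit i (out n)}"
    have finA: "finite A" unfolding A_def by simp
    have cardA: "card A \<le> 2 ^ T" unfolding A_def
      by (rule order.trans[OF card_mono[of "{..<2^T}"]]) auto
    define P where "P = (\<Sum>i\<in>A. (c i)\<^sup>2)"
    have accv: "acc Q out pw qa x (subset_state S) = real_of_int P / real (N * 2 ^ h)"
    proof -
      have "acc Q out pw qa x (subset_state S) = (\<Sum>i\<in>A. (cmod (run_circuit (Q n) (initial_state x k (subset_state S)) i))\<^sup>2)"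
        unfolding acc_def Let_def A_def T_def k_def n_def by (rule refl)
      also have "\<dots> = (\<Sum>i\<in>A. real_of_int ((c i)\<^sup>2) / (real N * 2 ^ h))" by (simp only: c sq_term)
      also have "\<dots> = real_of_int P / real (N * 2 ^ h)" unfolding P_def by (simp add: sum_divide_distrib)
      finally show ?thesis .
    qed
    have P0: "P \<ge> 0" unfolding P_def by (simp add: sum_nonneg)
    have Ple: "P \<le> 2 ^ (T + 2*h)"
    proof -
      have "P \<le> (\<Sum>i\<in>A. 2 ^ (2*h))" unfolding P_def
      proof (rule sum_mono)
        fix i
        have "(c i)^2 = \<bar>c i\<bar>^2" by simp
        also have "\<dots> \<le> (2^h)^2" using cb[of i] by (intro power_mono) auto
        also have "\<dots> = 2 ^ (2*h)" by (metis power_mult mult.commute)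
        finally show "(c i)^2 \<le> 2 ^ (2*h)" .
      qed
      also have "\<dots> = int (card A) * 2 ^ (2*h)" by simp
      also have "\<dots> \<le> 2 ^ T * 2 ^ (2*h)"
      proof (rule mult_right_mono)
        have "int (card A) \<le> int (2 ^ T)" using cardA by (simp only: of_nat_le_iff)
        then show "int (card A) \<le> 2 ^ T" by simp
      qed simp
      also have "\<dots> = 2 ^ (T + 2*h)" by (simp add: power_add)
      finally show ?thesis .
    qed
    have hs: "h \<le> poly s n" using h s[of n] by simp
    have f1: "N * 2 ^ h > 0" using N0 by simp
      have f2: "max_acc Q out pw qa x = real (nat P) / real (N * 2 ^ h)"
        using maxeq accv P0 by simp
      have "nat P \<le> 2 ^ (T + 2*h)" using Ple P0 by (simp add: nat_le_iff)
      hence "log 2 (real (nat P)) \<le> real (T + 2*h)" by (rule log2_bound)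
      also have "\<dots> \<le> real (poly l (length x))"
        using hs by (simp add: l T_def total_qubits_def n_def k_def)
      finally have f3: "log 2 (real (nat P)) \<le> real (poly l (length x))" .
      have "N * 2 ^ h \<le> 2 ^ k * 2 ^ h" using Nle by simp
      also have "\<dots> = 2 ^ (k + h)" by (simp add: power_add)
      finally have "log 2 (real (N * 2 ^ h)) \<le> real (k + h)" by (rule log2_bound)
      also have "\<dots> \<le> real (poly l (length x))"
        using hs by (simp add: l k_def n_def)
      finally have f4: "log 2 (real (N * 2 ^ h)) \<le> real (poly l (length x))" .
    show "\<exists>p q :: nat. q > 0
           \<and> max_acc Q out pw qa x = real p / real q
           \<and> log 2 (real p) \<le> real (poly l (length x))
           \<and> log 2 (real q) \<le> real (poly l (length x))"
      using f1 f2 f3 f4 by blast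
  qed
qed

end
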